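(* Assume that for every $t$ the local noises $w^1_t,\ldots,w^n_t$ are exchangeable. Then the optimal strategy (minimizing $J(g)$ over all strategies $g$) is characterized by the Bellman equation on the planning space $\mathcal{M}(n)\times\{0,1,2,\ldots\}$: for all $x\in\mathcal{M}(n)$ and $y\in\{0,1,2,\ldots\}$, $$V(x,y)=\min_{a\in\{0,1\}}\Big(\hat c(x,y,a)+\gamma\,\mathbb{E}\big[V(\hat f(x,y,o))\big]\Big),$$ where the expectation is over $o\in\mathcal{O}$ with distribution $$\mathbb{P}(o\mid x,y,a)=(1-aq)\,\mathbb{1}\{o=\mathtt{blank}\}+a\,q\,T_{\mathsf m}^{y+1}(o,x)\,\mathbb{1}\{o\neq\mathtt{blank}\};$$ i.e. the strategy which at every time $t$ selects an action attaining the minimum at $(x_t,y_t)$ is optimal.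
   Context: Setting: $n\in\mathbb{N}$ nodes, finite state set $\mathcal{S}\subset\mathbb{R}$, finite noise set $\mathcal{W}\subset\mathbb{R}$, time $t\in\mathbb{N}=\{1,2,\ldots\}$. Node $i$ has state $s^i_t\in\mathcal{S}$; the empirical distribution is $m_t(s)=\frac1n\sum_{i=1}^n\mathbb{1}\{s^i_t=s\}$, taking values in $\mathcal{M}(n)$, the set of probability vectors on $\mathcal{S}$ whose entries lie in $\{0,\frac1n,\ldots,1\}$. States evolve as $s^i_{t+1}=f(s^i_t,m_t,w^i_t)$ with local noise $w^i_t\in\mathcal{W}$. A decision maker picks $a_t\in\{0,1\}$ ($1$ = collect data). Observations $o_t\in\mathcal{O}=\mathcal{M}(n)\cup\{\mathtt{blank}\}$: $o_1=m_1$; if $a_t=0$ then $o_{t+1}=\mathtt{blank}$; if $a_t=1$ then $o_{t+1}=m_{t+1}$ with probability $q\in[0,1]$ (credible data) and $o_{t+1}=\mathtt{blank}$ with probability $1-q$. A strategy is $g=(g_1,g_2,\ldots)$ with $a_t=g_t(o_{1:t},a_{1:t-1})$. The initial states, noise vectors $(w^1_t,\ldots,w^n_t)$, $t\in\mathbb{N}$, and the Bernoulli($q$) credibility variables are mutually independent with finite variances. The estimate is $\hat m_t=h(\mathbb{P}(m_t\mid o_{1:t},a_{1:t-1}))\in\mathcal{M}(n)$ for a fixed function $h$ from probability distributions on $\mathcal{M}(n)$ to $\mathcal{M}(n)$. Per-step cost $c:\mathcal{M}(n)^2\times\{0,1\}\to\mathbb{R}_{\ge0}$ evaluated at $(m_t,\hat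 m_t,a_t)$; discount $\gamma\in(0,1)$; $J(g)=\mathbb{E}^g[\sum_{t=1}^\infty\gamma^{t-1}c(m_t,\hat m_t,a_t)]$. Under exchangeable noises $m_t$ is a (time-homogeneous) Markov chain with transition matrix $T_{\mathsf m}(m',m)=\mathbb{P}(m_{t+1}=m'\mid m_t=m)$; $T_{\mathsf m}^y$ is its $y$-th power and $T_{\mathsf m}^y(\cdot,x)$ the distribution after $y$ steps from $x$. $x_t$ denotes the last non-blank observation up to time $t$ and $y_t$ the number of blank observations since then, $(x_1,y_1)=(m_1,0)$, with $(x_{t+1},y_{t+1})=\hat f(x_t,y_t,o_{t+1})$ where $\hat f(x,y,o)=(x,y+1)$ if $o=\mathtt{blank}$ and $\hat f(x,y,o)=(o,0)$ otherwise. Define $\hat c(x,y,a)=\sum_{m\in\mathcal{M}(n)}c\big(m,h(T_{\mathsf m}^{y}(\cdot,x)),a\big)\,T_{\mathsf m}^{y}(m,x)$. *)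

theory Defs
  imports "HOL-Probability.Probability" "HOL-Combinatorics.Permutations"
begin

text \<open>Empirical distributions are functions real => real (supported in S);
observations are options (None = blank); actions are bool (True = collect data).
Nodes are indexed 0..n-1; state and noise vectors are functions nat => real.\<close>

type_synonym mf = "real \<Rightarrow> real"
type_synonym obs = "mf option"
type_synonym hist = "((nat \<Rightarrow> real) \<times> obs \<times> bool) list"
type_synonym strategy = "nat \<Rightarrow> obs list \<Rightarrow> bool list \<Rightarrow> bool"

definition emp :: "nat \<Rightarrow> (nat \<Rightarrow> real) \<Rightarrow> mf" where
  "emp n s = (\<lambda>x. real (card {i. i < n \<and> s i = x}) / real n)"

definition Mn :: "nat \<Rightarrow> real set \<Rightarrow> mf set" where
  "Mn n S = {m. (\<forall>x. x \<notin> S \<longrightarrow> m x = 0)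
              \<and> (\<forall>x\<in>S. \<exists>k::nat. k \<le> n \<and> m x = real k / real n)
              \<and> (\<Sum>x\<in>S. m x) = 1}"

definition exchangeable :: "nat \<Rightarrow> (nat \<Rightarrow> real) pmf \<Rightarrow> bool" where
  "exchangeable n p \<longleftrightarrow> (\<forall>\<pi>. \<pi> permutes {..<n} \<longrightarrow> map_pmf (\<lambda>w. w \<circ> \<pi>) p = p)"

definition obs_of :: "hist \<Rightarrow> obs list" where
  "obs_of hs = map (\<lambda>e. fst (snd e)) hs"

definition acts_of :: "hist \<Rightarrow> bool list" where
  "acts_of hs = map (\<lambda>e. snd (snd e)) hs"

text \<open>One step: history up to time t (length t), noise w, credibility bit b.
New entry is time t+1.\<close>
definition ext_hist :: "nat \<Rightarrow> (real \<Rightarrow> mf \<Rightarrow> real \<Rightarrow> real) \<Rightarrow> strategy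
    \<Rightarrow> hist \<Rightarrow> (nat \<Rightarrow> real) \<Rightarrow> bool \<Rightarrow> hist" where
  "ext_hist n f g hs w b =
     (let s = fst (last hs); a = snd (snd (last hs));
          s' = (\<lambda>i. f (s i) (emp n s) (w i));
          ob' = (if a \<and> b then Some (emp n s') else None)
      in hs @ [(s', ob', g (Suc (length hs)) (obs_of hs @ [ob']) (acts_of hs))])"

text \<open>traj ... g k = joint law of the history up to time k+1 under strategy g.\<close>
fun traj :: "nat \<Rightarrow> (real \<Rightarrow> mf \<Rightarrow> real \<Rightarrow> real) \<Rightarrow> (nat \<Rightarrow> real) pmf \<Rightarrow> (nat \<Rightarrow> real) pmf
    \<Rightarrow> real \<Rightarrow> strategy \<Rightarrow> nat \<Rightarrow> hist pmf" where
  "traj n f init noise q g 0 =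
     map_pmf (\<lambda>s. [(s, Some (emp n s), g 1 [Some (emp n s)] [])]) init"
| "traj n f init noise q g (Suc k) =
     bind_pmf (traj n f init noise q g k) (\<lambda>hs.
       bind_pmf noise (\<lambda>w. map_pmf (\<lambda>b. ext_hist n f g hs w b) (bernoulli_pmf q)))"

text \<open>Conditional law of m_t given o_{1:t}, a_{1:t-1} (those of the history hs).\<close>
definition belief :: "nat \<Rightarrow> hist pmf \<Rightarrow> hist \<Rightarrow> mf pmf" where
  "belief n P hs = map_pmf (\<lambda>hs'. emp n (fst (last hs')))
     (cond_pmf P {hs'. obs_of hs' = obs_of hs \<and> butlast (acts_of hs') = butlast (acts_of hs)})"

definition J :: "nat \<Rightarrow> (real \<Rightarrow> mf \<Rightarrow> real \<Rightarrow> real) \<Rightarrow> (nat \<Rightarrow> real) pmf \<Rightarrow> (nat \<Rightarrow> real) pmf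
    \<Rightarrow> real \<Rightarrow> (mf pmf \<Rightarrow> mf) \<Rightarrow> (mf \<Rightarrow> mf \<Rightarrow> bool \<Rightarrow> real) \<Rightarrow> real \<Rightarrow> strategy \<Rightarrow> real" where
  "J n f init noise q h c \<gamma> g =
     (\<Sum>k. \<gamma> ^ k * measure_pmf.expectation (traj n f init noise q g k)
        (\<lambda>hs. c (emp n (fst (last hs))) (h (belief n (traj n f init noise q g k) hs))
               (snd (snd (last hs)))))"

text \<open>Transition matrix of the empirical distribution: from m, pick any state
configuration with empirical distribution m (well-defined under exchangeability).\<close>
definition rep :: "nat \<Rightarrow> real set \<Rightarrow> mf \<Rightarrow> nat \<Rightarrow> real" where
  "rep n S m = (SOME s. (\<forall>i<n. s i \<in> S) \<and> emp n s = m)"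

definition Tstep :: "nat \<Rightarrow> real set \<Rightarrow> (real \<Rightarrow> mf \<Rightarrow> real \<Rightarrow> real) \<Rightarrow> (nat \<Rightarrow> real) pmf
    \<Rightarrow> mf \<Rightarrow> mf pmf" where
  "Tstep n S f noise m = map_pmf (\<lambda>w. emp n (\<lambda>i. f (rep n S m i) m (w i))) noise"

text \<open>Tpow ... y x = T_m^y(., x); so T_m^y(m, x) = pmf (Tpow ... y x) m.\<close>
fun Tpow :: "nat \<Rightarrow> real set \<Rightarrow> (real \<Rightarrow> mf \<Rightarrow> real \<Rightarrow> real) \<Rightarrow> (nat \<Rightarrow> real) pmf
    \<Rightarrow> nat \<Rightarrow> mf \<Rightarrow> mf pmf" where
  "Tpow n S f noise 0 x = return_pmf x"
| "Tpow n S f noise (Suc y) x = bind_pmf (Tpow n S f noise y x) (Tstep n S f noise)"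

definition chat :: "nat \<Rightarrow> real set \<Rightarrow> (real \<Rightarrow> mf \<Rightarrow> real \<Rightarrow> real) \<Rightarrow> (nat \<Rightarrow> real) pmf
    \<Rightarrow> (mf pmf \<Rightarrow> mf) \<Rightarrow> (mf \<Rightarrow> mf \<Rightarrow> bool \<Rightarrow> real) \<Rightarrow> mf \<Rightarrow> nat \<Rightarrow> bool \<Rightarrow> real" where
  "chat n S f noise h c x y a =
     (\<Sum>m\<in>Mn n S. c m (h (Tpow n S f noise y x)) a * pmf (Tpow n S f noise y x) m)"

definition fhat :: "mf \<Rightarrow> nat \<Rightarrow> obs \<Rightarrow> mf \<times> nat" where
  "fhat x y ob = (case ob of None \<Rightarrow> (x, Suc y) | Some m \<Rightarrow> (m, 0))"

definition xy :: "obs list \<Rightarrow> mf \<times> nat" where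
  "xy os = foldl (\<lambda>p ob. fhat (fst p) (snd p) ob) (the (hd os), 0) (tl os)"

definition obsprob :: "nat \<Rightarrow> real set \<Rightarrow> (real \<Rightarrow> mf \<Rightarrow> real \<Rightarrow> real) \<Rightarrow> (nat \<Rightarrow> real) pmf
    \<Rightarrow> real \<Rightarrow> mf \<Rightarrow> nat \<Rightarrow> bool \<Rightarrow> obs \<Rightarrow> real" where
  "obsprob n S f noise q x y a ob =
     (1 - of_bool a * q) * of_bool (ob = None)
     + of_bool a * q * (case ob of None \<Rightarrow> 0 | Some m \<Rightarrow> pmf (Tpow n S f noise (Suc y) x) m)"

definition Qval :: "nat \<Rightarrow> real set \<Rightarrow> (real \<Rightarrow> mf \<Rightarrow> real \<Rightarrow> real) \<Rightarrow> (nat \<Rightarrow> real) pmf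
    \<Rightarrow> real \<Rightarrow> (mf pmf \<Rightarrow> mf) \<Rightarrow> (mf \<Rightarrow> mf \<Rightarrow> bool \<Rightarrow> real) \<Rightarrow> real
    \<Rightarrow> (mf \<Rightarrow> nat \<Rightarrow> real) \<Rightarrow> mf \<Rightarrow> nat \<Rightarrow> bool \<Rightarrow> real" where
  "Qval n S f noise q h c \<gamma> V x y a =
     chat n S f noise h c x y a
     + \<gamma> * (\<Sum>ob\<in>insert None (Some ` Mn n S).
              obsprob n S f noise q x y a ob * case_prod V (fhat x y ob))"

definition bellman :: "nat \<Rightarrow> real set \<Rightarrow> (real \<Rightarrow> mf \<Rightarrow> real \<Rightarrow> real) \<Rightarrow> (nat \<Rightarrow> real) pmf
    \<Rightarrow> real \<Rightarrow> (mf pmf \<Rightarrow> mf) \<Rightarrow> (mf \<Rightarrow> mf \<Rightarrow> bool \<Rightarrow> real) \<Rightarrow> real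
    \<Rightarrow> (mf \<Rightarrow> nat \<Rightarrow> real) \<Rightarrow> bool" where
  "bellman n S f noise q h c \<gamma> V \<longleftrightarrow>
     (\<forall>x\<in>Mn n S. \<forall>y. V x y = min (Qval n S f noise q h c \<gamma> V x y False)
                                 (Qval n S f noise q h c \<gamma> V x y True))"

definition bounded_V :: "nat \<Rightarrow> real set \<Rightarrow> (mf \<Rightarrow> nat \<Rightarrow> real) \<Rightarrow> bool" where
  "bounded_V n S V \<longleftrightarrow> (\<exists>B. \<forall>x\<in>Mn n S. \<forall>y. \<bar>V x y\<bar> \<le> B)"

end

theory Submission
  imports Defs
begin



lemma card_fibers:
  assumes "finite A" "finite S" "s ` A \<subseteq> S"
  shows "(\<Sum>x\<in>S. card {i\<in>A. s i = x}) = card A"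
proof -
  have "A = (\<Union>x\<in>S. {i\<in>A. s i = x})" using assms by auto
  hence "card A = card (\<Union>x\<in>S. {i\<in>A. s i = x})" by simp
  also have "\<dots> = (\<Sum>x\<in>S. card {i\<in>A. s i = x})"
    by (rule card_UN_disjoint) (use assms in auto)
  finally show ?thesis by simp
qed

lemma emp_Mn:
  assumes "n \<ge> 1" "finite S" "\<forall>i<n. s i \<in> S"
  shows "emp n s \<in> Mn n S"
proof -
  have "(\<Sum>x\<in>S. card {i\<in>{..<n}. s i = x}) = n"
    using card_fibers[of "{..<n}" S s] assms by auto
  moreover have "{i\<in>{..<n}. s i = x} = {i. i < n \<and> s i = x}" for x by auto
  ultimately have "(\<Sum>x\<in>S. card {i. i < n \<and> s i = x}) = n" by simp
  hence "(\<Sum>x\<in>S. real (card {i. i < n \<and> s i = x})) = real n"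
    by (metis of_nat_sum)
  hence "(\<Sum>x\<in>S. real (card {i. i < n \<and> s i = x})) / real n = 1" using assms(1) by simp
  hence s1: "(\<Sum>x\<in>S. emp n s x) = 1"
    unfolding emp_def by (simp add: sum_divide_distrib)
  have c: "card {i. i < n \<and> s i = x} \<le> n" for x
  proof -
    have "card {i. i < n \<and> s i = x} \<le> card {..<n}" by (rule card_mono) auto
    thus ?thesis by simp
  qed
  have z: "x \<notin> S \<Longrightarrow> emp n s x = 0" for x
  proof -
    assume "x \<notin> S"
    hence "{i. i < n \<and> s i = x} = {}" using assms(3) by auto
    thus ?thesis unfolding emp_def by simp
  qed
  have k: "\<exists>k::nat. k \<le> n \<and> emp n s x = real k / real n" for x
    using c unfolding emp_def by blast
  show ?thesis unfolding Mn_def using s1 z k by blast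
qed

lemma finite_Mn: "finite S \<Longrightarrow> finite (Mn n S)"
proof -
  assume fS: "finite S"
  have "Mn n S \<subseteq> {m. \<forall>x. (x \<in> S \<longrightarrow> m x \<in> (\<lambda>k. real k / real n) ` {..n}) \<and> (x \<notin> S \<longrightarrow> m x = 0)}"
    unfolding Mn_def by auto
  moreover have "finite \<dots>" by (rule finite_set_of_finite_funs) (use fS in auto)
  ultimately show ?thesis by (rule finite_subset)
qed

lemma card_nth_count:
  "card {i. i < length xs \<and> xs ! i = x} = count (mset xs) x"
  by (simp add: count_mset count_list_eq_length_filter length_filter_conv_card eq_commute)

lemma Mn_realizable:
  assumes "n \<ge> 1" "finite S" "m \<in> Mn n S"
  shows "\<exists>s. (\<forall>i<n. s i \<in> S) \<and> emp n s = m"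
proof -
  from assms(3) have z: "\<And>x. x \<notin> S \<Longrightarrow> m x = 0"
    and kk: "\<forall>x\<in>S. \<exists>k::nat. k \<le> n \<and> m x = real k / real n"
    and sm: "(\<Sum>x\<in>S. m x) = 1" unfolding Mn_def by auto
  from kk obtain k where k: "\<And>x. x \<in> S \<Longrightarrow> m x = real (k x) / real n"
    by metis
  define K where "K = (\<Sum>x\<in>S. replicate_mset (k x) x)"
  obtain xs where xs: "mset xs = K" using ex_mset by blast
  have cK: "count K y = (if y \<in> S then k y else 0)" for y
    unfolding K_def using assms(2)
    by (induction S rule: finite_induct) auto
  have "size K = (\<Sum>x\<in>S. k x)" unfolding K_def using assms(2)
    by (induction S rule: finite_induct) auto
  moreover have "real (\<Sum>x\<in>S. k x) = real n"
  proof -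
    have "(\<Sum>x\<in>S. real (k x) / real n) = 1" using sm k by simp
    hence "(\<Sum>x\<in>S. real (k x)) / real n = 1" by (simp add: sum_divide_distrib)
    thus ?thesis using assms(1) by simp
  qed
  ultimately have len: "length xs = n" using xs by (metis of_nat_eq_iff size_mset)
  have setxs: "set xs \<subseteq> S" using xs cK
    by (metis count_eq_zero_iff in_multiset_in_set subsetI)
  define s where "s = (\<lambda>i. xs ! i)"
  have "\<forall>i<n. s i \<in> S" using setxs len unfolding s_def by auto
  moreover have "emp n s = m"
  proof
    fix x
    have "emp n s x = real (count K x) / real n"
      unfolding emp_def s_def using card_nth_count[of xs x] len xs by simp
    also have "\<dots> = m x" using cK k z by auto
    finally show "emp n s x = m x" .
  qed
  ultimately show ?thesis by blast
qed

lemma emp_count: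
  "real n * emp n s x = (if n = 0 then 0 else real (count (mset (map s [0..<n])) x))"
proof -
  have e: "{i. i < length (map s [0..<n]) \<and> map s [0..<n] ! i = x} = {i. i < n \<and> s i = x}" by auto
  have "card {i. i < n \<and> s i = x} = count (mset (map s [0..<n])) x"
    using card_nth_count[of "map s [0..<n]" x] unfolding e .
  thus ?thesis unfolding emp_def by simp
qed

lemma emp_perm:
  assumes "emp n s = emp n s'" "n \<ge> 1"
  shows "\<exists>\<pi>. \<pi> permutes {..<n} \<and> (\<forall>i<n. s' i = s (\<pi> i))"
proof -
  have "mset (map s' [0..<n]) = mset (map s [0..<n])"
  proof (rule multiset_eqI)
    fix x
    have "real n * emp n s x = real n * emp n s' x" using assms by simp
    thus "count (mset (map s' [0..<n])) x = count (mset (map s [0..<n])) x"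
      using assms(2) by (simp only: emp_count) simp
  qed
  then obtain p where p: "p permutes {..<length (map s [0..<n])}"
     "permute_list p (map s [0..<n]) = map s' [0..<n]"
    by (rule mset_eq_permutation)
  have "\<forall>i<n. s' i = s (p i)"
  proof (intro allI impI)
    fix i assume i: "i < n"
    have "s' i = map s' [0..<n] ! i" using i by simp
    also have "\<dots> = permute_list p (map s [0..<n]) ! i" using p(2) by simp
    also have "\<dots> = map s [0..<n] ! p i" by (rule permute_list_nth) (use p i in auto)
    also have "\<dots> = s (p i)" using permutes_in_image[OF p(1)] i by simp
    finally show "s' i = s (p i)" .
  qed
  thus ?thesis using p by auto
qed

lemma emp_comp_perm:
  assumes "\<pi> permutes {..<n}"
  shows "emp n (F \<circ> \<pi>) = emp n F"
proof
  fix x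
  have "{i. i < n \<and> F (\<pi> i) = x} = \<pi> -` {i. i < n \<and> F i = x}"
    using permutes_in_image[OF assms] by auto
  hence "card {i. i < n \<and> F (\<pi> i) = x} = card {i. i < n \<and> F i = x}"
    using card_vimage_inj[OF permutes_inj[OF assms], of "{i. i < n \<and> F i = x}"]
      permutes_surj[OF assms] by simp
  thus "emp n (F \<circ> \<pi>) x = emp n F x" unfolding emp_def by simp
qed




lemma emp_cong: "(\<And>i. i < n \<Longrightarrow> F i = G i) \<Longrightarrow> emp n F = emp n G"
  unfolding emp_def by (intro ext) (metis (no_types, lifting) Collect_cong)

locale setting =
  fixes n :: nat and S W :: "real set"
    and f :: "real \<Rightarrow> mf \<Rightarrow> real \<Rightarrow> real"
    and init noise :: "(nat \<Rightarrow> real) pmf"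
    and q \<gamma> :: real
    and h :: "mf pmf \<Rightarrow> mf"
    and c :: "mf \<Rightarrow> mf \<Rightarrow> bool \<Rightarrow> real"
  assumes n_pos: "n \<ge> 1"
    and S_fin: "finite S" and S_ne: "S \<noteq> {}"
    and W_fin: "finite W"
    and f_range: "\<forall>s\<in>S. \<forall>m\<in>Mn n S. \<forall>w\<in>W. f s m w \<in> S"
    and init_range: "set_pmf init \<subseteq> {s. \<forall>i<n. s i \<in> S}"
    and noise_range: "set_pmf noise \<subseteq> {w. \<forall>i<n. w i \<in> W}"
    and exch: "exchangeable n noise"
    and q_range: "0 \<le> q" "q \<le> 1"
    and \<gamma>_range: "0 < \<gamma>" "\<gamma> < 1"
    and h_range: "\<forall>p. set_pmf p \<subseteq> Mn n S \<longrightarrow> h p \<in> Mn n S"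
    and c_nonneg: "\<forall>m\<in>Mn n S. \<forall>m'\<in>Mn n S. \<forall>a. 0 \<le> c m m' a"

context setting
begin

lemma Tstep_emp:
  assumes s: "\<forall>i<n. s i \<in> S"
  shows "map_pmf (\<lambda>w. emp n (\<lambda>i. f (s i) (emp n s) (w i))) noise = Tstep n S f noise (emp n s)"
proof -
  define m where "m = emp n s"
  define s' where "s' = rep n S m"
  have "(\<forall>i<n. s' i \<in> S) \<and> emp n s' = m" unfolding s'_def rep_def
    by (rule someI[of _ s]) (use s m_def in auto)
  hence "emp n s = emp n s'" using m_def by simp
  then obtain \<pi> where \<pi>: "\<pi> permutes {..<n}" "\<forall>i<n. s' i = s (\<pi> i)"
    using emp_perm[of n s s'] n_pos by blast
  have ip: "inv \<pi> permutes {..<n}" using permutes_inv[OF \<pi>(1)] .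
  define G where "G = (\<lambda>w. emp n (\<lambda>i. f (s i) m (w i)))"
  have "Tstep n S f noise m = map_pmf (\<lambda>w. emp n (\<lambda>i. f (s' i) m (w i))) noise"
    unfolding Tstep_def s'_def ..
  also have "(\<lambda>w. emp n (\<lambda>i. f (s' i) m (w i))) = (\<lambda>w. G (w \<circ> inv \<pi>))"
  proof
    fix w
    have "emp n (\<lambda>i. f (s' i) m (w i)) = emp n (\<lambda>i. f (s (\<pi> i)) m (w i))"
      by (rule emp_cong) (use \<pi> in auto)
    also have "(\<lambda>i. f (s (\<pi> i)) m (w i)) = (\<lambda>i. f (s i) m ((w \<circ> inv \<pi>) i)) \<circ> \<pi>"
      using permutes_inverses(2)[OF \<pi>(1)] by (auto simp: fun_eq_iff)
    also have "emp n \<dots> = G (w \<circ> inv \<pi>)" unfolding G_def by (rule emp_comp_perm[OF \<pi>(1)])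
    finally show "emp n (\<lambda>i. f (s' i) m (w i)) = G (w \<circ> inv \<pi>)" .
  qed
  also have "map_pmf (\<lambda>w. G (w \<circ> inv \<pi>)) noise = map_pmf G (map_pmf (\<lambda>w. w \<circ> inv \<pi>) noise)"
    by (simp add: pmf.map_comp o_def)
  also have "map_pmf (\<lambda>w. w \<circ> inv \<pi>) noise = noise"
    using exch ip unfolding exchangeable_def by blast
  finally show ?thesis unfolding G_def m_def ..
qed

lemma set_Tstep:
  assumes "x \<in> Mn n S"
  shows "set_pmf (Tstep n S f noise x) \<subseteq> Mn n S"
proof -
  obtain s0 where "(\<forall>i<n. s0 i \<in> S) \<and> emp n s0 = x"
    using Mn_realizable[OF n_pos S_fin assms] by blast
  hence "(\<forall>i<n. rep n S x i \<in> S) \<and> emp n (rep n S x) = x" unfolding rep_def by (rule someI[where P="\<lambda>s. (\<forall>i<n. s i \<in> S) \<and> emp n s = x"])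
  hence r: "\<forall>i<n. rep n S x i \<in> S" by blast
  show ?thesis
  proof
    fix m assume "m \<in> set_pmf (Tstep n S f noise x)"
    then obtain w where w: "w \<in> set_pmf noise" and m: "m = emp n (\<lambda>i. f (rep n S x i) x (w i))"
      unfolding Tstep_def by auto
    have "\<forall>i<n. f (rep n S x i) x (w i) \<in> S"
      using r w noise_range f_range assms by blast
    thus "m \<in> Mn n S" unfolding m by (rule emp_Mn[OF n_pos S_fin])
  qed
qed

lemma set_Tpow: "x \<in> Mn n S \<Longrightarrow> set_pmf (Tpow n S f noise y x) \<subseteq> Mn n S"
  by (induction y) (use set_Tstep in fastforce)+

lemma finite_Tpow: "x \<in> Mn n S \<Longrightarrow> finite (set_pmf (Tpow n S f noise y x))"
  using set_Tpow finite_Mn[OF S_fin] finite_subset by blast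

end



context setting begin

abbreviation "Ob \<equiv> insert None (Some ` Mn n S)"

lemma finite_Ob: "finite Ob" using finite_Mn[OF S_fin] by simp

lemma obsprob_nonneg: "0 \<le> obsprob n S f noise q x y a ob"
  unfolding obsprob_def using q_range by (auto split: option.splits)

lemma obsprob_sum:
  assumes "x \<in> Mn n S"
  shows "(\<Sum>ob\<in>Ob. obsprob n S f noise q x y a ob) = 1"
proof -
  have fM: "finite (Mn n S)" using finite_Mn[OF S_fin] .
  have "(\<Sum>ob\<in>Ob. obsprob n S f noise q x y a ob)
      = obsprob n S f noise q x y a None + (\<Sum>ob\<in>Some ` Mn n S. obsprob n S f noise q x y a ob)"
    using fM by (subst sum.insert) auto
  also have "(\<Sum>ob\<in>Some ` Mn n S. obsprob n S f noise q x y a ob)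
      = (\<Sum>m\<in>Mn n S. obsprob n S f noise q x y a (Some m))"
    by (subst sum.reindex) auto
  also have "\<dots> = (\<Sum>m\<in>Mn n S. of_bool a * q * pmf (Tpow n S f noise (Suc y) x) m)"
    unfolding obsprob_def by simp
  also have "\<dots> = of_bool a * q * (\<Sum>m\<in>Mn n S. pmf (Tpow n S f noise (Suc y) x) m)"
    by (simp add: sum_distrib_left)
  also have "(\<Sum>m\<in>Mn n S. pmf (Tpow n S f noise (Suc y) x) m) = 1"
    by (rule sum_pmf_eq_1[OF fM set_Tpow[OF assms]])
  finally show ?thesis unfolding obsprob_def by simp
qed

lemma fhat_in: "x \<in> Mn n S \<Longrightarrow> ob \<in> Ob \<Longrightarrow> fst (fhat x y ob) \<in> Mn n S"
  unfolding fhat_def by auto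

definition "Cb = (\<Sum>m\<in>Mn n S. \<Sum>m'\<in>Mn n S. c m m' True + c m m' False)"

lemma c_le_Cb:
  assumes "m \<in> Mn n S" "m' \<in> Mn n S"
  shows "c m m' a \<le> Cb"
proof -
  have fM: "finite (Mn n S)" using finite_Mn[OF S_fin] .
  have nn: "\<And>u v. u \<in> Mn n S \<Longrightarrow> v \<in> Mn n S \<Longrightarrow> 0 \<le> c u v True + c u v False"
    using c_nonneg by (simp add: add_nonneg_nonneg)
  have c0: "0 \<le> c m m' True" "0 \<le> c m m' False" using c_nonneg assms by auto
  have "c m m' a \<le> c m m' True + c m m' False"
    using c0 by (cases a) auto
  also have "\<dots> \<le> (\<Sum>m'\<in>Mn n S. c m m' True + c m m' False)"
    by (rule member_le_sum[OF assms(2) _ fM]) (simp add: nn assms(1))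
  also have "\<dots> \<le> Cb" unfolding Cb_def
  proof (rule member_le_sum[OF assms(1) _ fM])
    fix u assume "u \<in> Mn n S - {m}"
    hence u: "u \<in> Mn n S" by simp
    show "0 \<le> (\<Sum>m'\<in>Mn n S. c u m' True + c u m' False)"
      by (rule sum_nonneg) (simp add: nn u)
  qed
  finally show ?thesis .
qed

lemma chat_bounds:
  assumes "x \<in> Mn n S"
  shows "0 \<le> chat n S f noise h c x y a \<and> chat n S f noise h c x y a \<le> Cb"
proof -
  let ?P = "Tpow n S f noise y x"
  have fM: "finite (Mn n S)" using finite_Mn[OF S_fin] .
  have hP: "h ?P \<in> Mn n S" using h_range set_Tpow[OF assms] by blast
  have "0 \<le> chat n S f noise h c x y a" unfolding chat_def
  proof (rule sum_nonneg)
    fix m assume "m \<in> Mn n S"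
    thus "0 \<le> c m (h ?P) a * pmf ?P m" using hP c_nonneg by simp
  qed
  moreover have "chat n S f noise h c x y a \<le> (\<Sum>m\<in>Mn n S. Cb * pmf ?P m)"
    unfolding chat_def
  proof (rule sum_mono)
    fix m assume "m \<in> Mn n S"
    thus "c m (h ?P) a * pmf ?P m \<le> Cb * pmf ?P m"
      using hP c_le_Cb by (simp add: mult_right_mono)
  qed
  moreover have "(\<Sum>m\<in>Mn n S. Cb * pmf ?P m) = Cb"
    using sum_pmf_eq_1[OF fM set_Tpow[OF assms]] by (simp add: sum_distrib_left[symmetric])
  ultimately show ?thesis by simp
qed

lemma Qval_contr:
  assumes x: "x \<in> Mn n S" and d: "\<forall>x'\<in>Mn n S. \<forall>y'. \<bar>U x' y' - U' x' y'\<bar> \<le> d"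
  shows "\<bar>Qval n S f noise q h c \<gamma> U x y a - Qval n S f noise q h c \<gamma> U' x y a\<bar> \<le> \<gamma> * d"
proof -
  let ?p = "obsprob n S f noise q x y a"
  have e: "(\<Sum>ob\<in>Ob. ?p ob * case_prod U (fhat x y ob)) - (\<Sum>ob\<in>Ob. ?p ob * case_prod U' (fhat x y ob))
     = (\<Sum>ob\<in>Ob. ?p ob * (case_prod U (fhat x y ob) - case_prod U' (fhat x y ob)))"
    by (simp add: case_prod_beta sum_subtractf[symmetric] right_diff_distrib)
  have eq: "Qval n S f noise q h c \<gamma> U x y a - Qval n S f noise q h c \<gamma> U' x y a
     = \<gamma> * (\<Sum>ob\<in>Ob. ?p ob * (case_prod U (fhat x y ob) - case_prod U' (fhat x y ob)))"
    unfolding Qval_def e[symmetric] by (simp add: right_diff_distrib)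
  have "\<bar>Qval n S f noise q h c \<gamma> U x y a - Qval n S f noise q h c \<gamma> U' x y a\<bar>
     = \<gamma> * \<bar>\<Sum>ob\<in>Ob. ?p ob * (case_prod U (fhat x y ob) - case_prod U' (fhat x y ob))\<bar>"
    unfolding eq using \<gamma>_range by (simp add: abs_mult)
  moreover have "\<bar>\<Sum>ob\<in>Ob. ?p ob * (case_prod U (fhat x y ob) - case_prod U' (fhat x y ob))\<bar> \<le> d"
  proof -
  have "\<bar>\<Sum>ob\<in>Ob. ?p ob * (case_prod U (fhat x y ob) - case_prod U' (fhat x y ob))\<bar>
      \<le> (\<Sum>ob\<in>Ob. \<bar>?p ob * (case_prod U (fhat x y ob) - case_prod U' (fhat x y ob))\<bar>)"
    by (rule sum_abs)
  also have "\<dots> \<le> (\<Sum>ob\<in>Ob. ?p ob * d)"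
  proof (rule sum_mono)
    fix ob assume ob: "ob \<in> Ob"
    have "\<bar>U (fst (fhat x y ob)) (snd (fhat x y ob)) - U' (fst (fhat x y ob)) (snd (fhat x y ob))\<bar> \<le> d"
      by (rule d[rule_format, OF fhat_in[OF x ob]])
    hence "\<bar>case_prod U (fhat x y ob) - case_prod U' (fhat x y ob)\<bar> \<le> d"
      unfolding case_prod_beta .
    moreover have p0: "0 \<le> ?p ob" by (rule obsprob_nonneg)
    ultimately have "?p ob * \<bar>case_prod U (fhat x y ob) - case_prod U' (fhat x y ob)\<bar> \<le> ?p ob * d"
      by (rule mult_left_mono)
    thus "\<bar>?p ob * (case_prod U (fhat x y ob) - case_prod U' (fhat x y ob))\<bar> \<le> ?p ob * d"
      using p0 by (simp add: abs_mult)
  qed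
  also have "\<dots> = d" by (simp only: sum_distrib_right[symmetric] obsprob_sum[OF x] mult_1)
  finally show ?thesis .
  qed
  ultimately show ?thesis using mult_left_mono[of _ d \<gamma>] \<gamma>_range(1) by simp
qed

definition Bop :: "(mf \<Rightarrow> nat \<Rightarrow> real) \<Rightarrow> mf \<Rightarrow> nat \<Rightarrow> real" where
  "Bop U = (\<lambda>x y. min (Qval n S f noise q h c \<gamma> U x y False) (Qval n S f noise q h c \<gamma> U x y True))"

definition "Vs N = (Bop ^^ N) (\<lambda>_ _. 0)"

lemma Vs_Suc: "Vs (Suc N) = Bop (Vs N)" unfolding Vs_def by simp

lemma min_diff: "\<bar>min (a::real) b - min a' b'\<bar> \<le> max \<bar>a - a'\<bar> \<bar>b - b'\<bar>"
  by (simp add: min_def max_def abs_if)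

lemma Vs_diff: "\<forall>x\<in>Mn n S. \<forall>y. \<bar>Vs (Suc N) x y - Vs N x y\<bar> \<le> \<gamma> ^ N * Cb"
proof (induction N)
  case 0
  show ?case
  proof (intro ballI allI)
    fix x y assume x: "x \<in> Mn n S"
    have "Vs (Suc 0) x y = min (chat n S f noise h c x y False) (chat n S f noise h c x y True)"
      by (simp add: Vs_def Bop_def Qval_def)
    thus "\<bar>Vs (Suc 0) x y - Vs 0 x y\<bar> \<le> \<gamma> ^ 0 * Cb"
      using chat_bounds[OF x, of y False] chat_bounds[OF x, of y True] by (simp add: Vs_def; simp add: min_def)
  qed
next
  case (Suc N)
  show ?case
  proof (intro ballI allI)
    fix x y assume x: "x \<in> Mn n S"
    have "\<bar>Vs (Suc (Suc N)) x y - Vs (Suc N) x y\<bar>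
        \<le> max \<bar>Qval n S f noise q h c \<gamma> (Vs (Suc N)) x y False - Qval n S f noise q h c \<gamma> (Vs N) x y False\<bar>
              \<bar>Qval n S f noise q h c \<gamma> (Vs (Suc N)) x y True - Qval n S f noise q h c \<gamma> (Vs N) x y True\<bar>"
      unfolding Vs_Suc[of "Suc N"] Vs_Suc[of N] Bop_def by (rule min_diff)
    also have "\<dots> \<le> \<gamma> * (\<gamma> ^ N * Cb)"
      using Qval_contr[OF x Suc.IH] by simp
    finally show "\<bar>Vs (Suc (Suc N)) x y - Vs (Suc N) x y\<bar> \<le> \<gamma> ^ Suc N * Cb" by simp
  qed
qed

definition "Vlim x y = (\<Sum>i. Vs (Suc i) x y - Vs i x y)"

lemma Cb_nonneg: "0 \<le> Cb"
proof -
  obtain s where "s \<in> set_pmf init" using set_pmf_not_empty[of init] by blast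
  hence "emp n s \<in> Mn n S" using init_range emp_Mn[OF n_pos S_fin] by blast
  thus ?thesis using c_le_Cb c_nonneg by (meson order.trans)
qed

lemma Vs_summable: "x \<in> Mn n S \<Longrightarrow> summable (\<lambda>i. Vs (Suc i) x y - Vs i x y)"
  by (rule summable_comparison_test[where g="\<lambda>i. \<gamma> ^ i * Cb"])
     (use Vs_diff \<gamma>_range in \<open>auto intro!: summable_mult2 summable_geometric\<close>)

lemma Vs_lim: "x \<in> Mn n S \<Longrightarrow> (\<lambda>N. Vs N x y) \<longlonglongrightarrow> Vlim x y"
proof -
  assume x: "x \<in> Mn n S"
  have "(\<lambda>N. \<Sum>i<N. Vs (Suc i) x y - Vs i x y) \<longlonglongrightarrow> Vlim x y"
    unfolding Vlim_def by (rule summable_LIMSEQ[OF Vs_summable[OF x]])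
  moreover have "(\<Sum>i<N. Vs (Suc i) x y - Vs i x y) = Vs N x y" for N
    by (subst sum_lessThan_telescope) (simp add: Vs_def)
  ultimately show ?thesis by simp
qed

lemma Vlim_bounded: "bounded_V n S Vlim"
proof -
  have B: "\<bar>Vlim x y\<bar> \<le> Cb / (1 - \<gamma>)" if x: "x \<in> Mn n S" for x y
  proof -
    have "\<bar>Vlim x y\<bar> \<le> (\<Sum>i. \<gamma> ^ i * Cb)"
    proof -
      have "\<bar>Vlim x y\<bar> \<le> (\<Sum>i. \<bar>Vs (Suc i) x y - Vs i x y\<bar>)"
        unfolding Vlim_def
        by (rule summable_rabs) (rule summable_rabs_comparison_test[where g="\<lambda>i. \<gamma> ^ i * Cb"],
          use Vs_diff x \<gamma>_range in \<open>auto intro!: summable_mult2 summable_geometric\<close>)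
      also have "\<dots> \<le> (\<Sum>i. \<gamma> ^ i * Cb)"
        by (rule suminf_le) (use Vs_diff x \<gamma>_range in \<open>auto intro!: summable_mult2 summable_geometric
              summable_rabs_comparison_test[where g="\<lambda>i. \<gamma> ^ i * Cb"]\<close>)
      finally show ?thesis .
    qed
    also have "\<dots> = Cb / (1 - \<gamma>)"
      using \<gamma>_range by (simp add: suminf_mult2[symmetric] suminf_geometric summable_geometric)
    finally show ?thesis .
  qed
  thus ?thesis unfolding bounded_V_def by blast
qed

lemma Qval_tendsto:
  assumes x: "x \<in> Mn n S"
  shows "(\<lambda>N. Qval n S f noise q h c \<gamma> (Vs N) x y a) \<longlonglongrightarrow> Qval n S f noise q h c \<gamma> Vlim x y a"
  unfolding Qval_def
proof (intro tendsto_intros)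
  fix ob assume ob: "ob \<in> Ob"
  have "fst (fhat x y ob) \<in> Mn n S" using fhat_in[OF x ob] .
  thus "(\<lambda>N. case_prod (Vs N) (fhat x y ob)) \<longlonglongrightarrow> case_prod Vlim (fhat x y ob)"
    by (simp add: case_prod_beta Vs_lim)
qed

lemma Vlim_bellman: "bellman n S f noise q h c \<gamma> Vlim"
  unfolding bellman_def
proof (intro ballI allI)
  fix x y assume x: "x \<in> Mn n S"
  have "(\<lambda>N. Vs (Suc N) x y) \<longlonglongrightarrow> Vlim x y" using Vs_lim[OF x] by (rule LIMSEQ_Suc)
  moreover have "(\<lambda>N. Vs (Suc N) x y) \<longlonglongrightarrow> min (Qval n S f noise q h c \<gamma> Vlim x y False)
      (Qval n S f noise q h c \<gamma> Vlim x y True)"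
    unfolding Vs_Suc Bop_def by (intro tendsto_min Qval_tendsto x)
  ultimately show "Vlim x y = min (Qval n S f noise q h c \<gamma> Vlim x y False) (Qval n S f noise q h c \<gamma> Vlim x y True)"
    by (rule LIMSEQ_unique)
qed

end



lemma xy_single: "xy [Some e] = (e, 0)" by (simp add: xy_def)

lemma xy_snoc: "os \<noteq> [] \<Longrightarrow> xy (os @ [ob]) = fhat (fst (xy os)) (snd (xy os)) ob"
  by (cases os) (simp_all add: xy_def)

lemma cond_pmf_cong_set:
  assumes ne: "set_pmf p \<inter> A \<noteq> {}" and eq: "A \<inter> set_pmf p = B \<inter> set_pmf p"
  shows "cond_pmf p A = cond_pmf p B"
proof -
  have neB: "set_pmf p \<inter> B \<noteq> {}" using ne eq by blast
  have m: "measure p A = measure p B"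
    by (metis eq measure_Int_set_pmf)
  show ?thesis
  proof (rule pmf_eqI)
    fix z
    show "pmf (cond_pmf p A) z = pmf (cond_pmf p B) z"
    proof (cases "z \<in> set_pmf p")
      case True
      hence "z \<in> A \<longleftrightarrow> z \<in> B" using eq by blast
      thus ?thesis by (simp add: pmf_cond[OF ne] pmf_cond[OF neB] m)
    next
      case False
      hence "pmf (cond_pmf p A) z = 0" "pmf (cond_pmf p B) z = 0"
        using set_cond_pmf[OF ne] set_cond_pmf[OF neB] by (auto simp: pmf_eq_0_set_pmf)
      thus ?thesis by simp
    qed
  qed
qed

lemma pmf_bind_pair:
  "pmf (bind_pmf Q (\<lambda>u. map_pmf (Pair u) (K u))) (u, m) = pmf Q u * pmf (K u) m"
proof -
  have "pmf (map_pmf (Pair u') (K u')) (u, m) = (if u' = u then pmf (K u) m else 0) " for u'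
  proof (cases "u' = u")
    case True thus ?thesis by (simp add: pmf_map_inj' inj_on_def)
  next
    case False
    hence "(u, m) \<notin> set_pmf (map_pmf (Pair u') (K u'))" by auto
    thus ?thesis using False by (simp add: pmf_eq_0_set_pmf)
  qed
  hence "pmf (bind_pmf Q (\<lambda>u. map_pmf (Pair u) (K u))) (u, m)
      = (\<integral>u'. pmf (K u) m * indicator {u} u' \<partial>measure_pmf Q)"
    unfolding pmf_bind by (intro Bochner_Integration.integral_cong) (auto split: split_indicator)
  also have "\<dots> = pmf (K u) m * pmf Q u" by (simp add: measure_pmf_single)
  finally show ?thesis by simp
qed

lemma cond_pmf_pair:
  assumes u0: "u0 \<in> set_pmf Q"
  shows "cond_pmf (bind_pmf Q (\<lambda>u. map_pmf (Pair u) (K u))) ({u0} \<times> UNIV) = map_pmf (Pair u0) (K u0)"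
proof -
  let ?R = "bind_pmf Q (\<lambda>u. map_pmf (Pair u) (K u))"
  have fstR: "map_pmf fst ?R = Q"
    by (simp add: map_bind_pmf pmf.map_comp o_def bind_return_pmf')
  have mR: "measure ?R ({u0} \<times> UNIV) = pmf Q u0"
  proof -
    have "measure ?R ({u0} \<times> UNIV) = measure ?R (fst -` {u0})"
      by (rule arg_cong[where f="measure ?R"]) auto
    also have "\<dots> = measure (map_pmf fst ?R) {u0}" by simp
    also have "\<dots> = pmf Q u0" using fstR by (simp add: measure_pmf_single)
    finally show ?thesis .
  qed
  have pos: "pmf Q u0 > 0" using u0 by (simp add: pmf_positive)
  obtain m0 where "m0 \<in> set_pmf (K u0)" using set_pmf_not_empty[of "K u0"] by blast
  hence "(u0, m0) \<in> set_pmf ?R" using u0 by auto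
  hence ne: "set_pmf ?R \<inter> ({u0} \<times> UNIV) \<noteq> {}" by blast
  show ?thesis
  proof (rule pmf_eqI)
    fix z
    show "pmf (cond_pmf ?R ({u0} \<times> UNIV)) z = pmf (map_pmf (Pair u0) (K u0)) z"
    proof (cases z)
      case (Pair u m)
      note z = Pair
      show ?thesis
      proof (cases "u = u0")
        case True
        thus ?thesis unfolding z using pos
          by (simp add: pmf_cond[OF ne] mR pmf_bind_pair pmf_map_inj' inj_on_def)
      next
        case False
        hence "z \<notin> set_pmf (map_pmf (Pair u0) (K u0))" unfolding z by auto
        thus ?thesis unfolding z using False by (simp add: pmf_cond[OF ne] pmf_eq_0_set_pmf)
      qed
    qed
  qed
qed

lemma expectation_bind_finite:
  fixes h :: "'b \<Rightarrow> real"
  assumes "finite (set_pmf p)" "\<And>x. x \<in> set_pmf p \<Longrightarrow> finite (set_pmf (f x))"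
  shows "measure_pmf.expectation (bind_pmf p f) h = measure_pmf.expectation p (\<lambda>x. measure_pmf.expectation (f x) h)"
proof -
  have "measure_pmf.expectation (bind_pmf p f) h = (\<Sum>a\<in>set_pmf p. pmf p a *\<^sub>R measure_pmf.expectation (f a) h)"
    by (rule pmf_expectation_bind) (use assms in auto)
  also have "\<dots> = measure_pmf.expectation p (\<lambda>x. measure_pmf.expectation (f x) h)"
    by (subst integral_measure_pmf_real[of "set_pmf p"]) (use assms in \<open>auto simp: mult.commute\<close>)
  finally show ?thesis .
qed




context setting begin

abbreviation "TT \<equiv> Tpow n S f noise"

definition obsdist :: "mf pmf \<Rightarrow> bool \<Rightarrow> obs pmf" where
  "obsdist P a = (if a then bind_pmf (bernoulli_pmf q) (\<lambda>b. if b then map_pmf Some P else return_pmf None)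
                  else return_pmf None)"

definition Gstep :: "strategy \<Rightarrow> obs list \<times> bool list \<Rightarrow> obs \<Rightarrow> obs list \<times> bool list" where
  "Gstep g u ob = (fst u @ [ob], snd u @ [g (Suc (length (fst u))) (fst u @ [ob]) (snd u)])"

fun Qp :: "strategy \<Rightarrow> nat \<Rightarrow> (obs list \<times> bool list) pmf" where
  "Qp g 0 = map_pmf (\<lambda>s. ([Some (emp n s)], [g 1 [Some (emp n s)] []])) init"
| "Qp g (Suc k) = bind_pmf (Qp g k) (\<lambda>u. map_pmf (Gstep g u)
      (obsdist (TT (Suc (snd (xy (fst u)))) (fst (xy (fst u)))) (last (snd u))))"

lemma set_obsdist: "set_pmf (obsdist P a) \<subseteq> insert None (Some ` set_pmf P)"
  unfolding obsdist_def by (auto split: if_splits)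

lemma init_emp: "s \<in> set_pmf init \<Longrightarrow> emp n s \<in> Mn n S"
  using init_range emp_Mn[OF n_pos S_fin] by blast

lemma QI:
  "u \<in> set_pmf (Qp g k) \<Longrightarrow> fst u \<noteq> [] \<and> length (fst u) = Suc k \<and> fst (xy (fst u)) \<in> Mn n S
     \<and> snd u \<noteq> [] \<and> last (snd u) = g (length (fst u)) (fst u) (butlast (snd u))"
proof (induction k arbitrary: u)
  case 0
  then obtain s where s: "s \<in> set_pmf init" and u: "u = ([Some (emp n s)], [g 1 [Some (emp n s)] []])"
    by auto
  show ?case using init_emp[OF s] unfolding u by (simp add: xy_single)
next
  case (Suc k)
  then obtain u0 ob where u0: "u0 \<in> set_pmf (Qp g k)"
    and ob: "ob \<in> set_pmf (obsdist (TT (Suc (snd (xy (fst u0)))) (fst (xy (fst u0)))) (last (snd u0)))"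
    and u: "u = Gstep g u0 ob" by auto
  note IH = Suc.IH[OF u0]
  have xyu: "xy (fst u) = fhat (fst (xy (fst u0))) (snd (xy (fst u0))) ob"
    unfolding u Gstep_def using IH by (simp add: xy_snoc)
  have "fst (xy (fst u)) \<in> Mn n S"
  proof (cases ob)
    case None thus ?thesis using IH xyu by (simp add: fhat_def)
  next
    case (Some m)
    hence "m \<in> set_pmf (TT (Suc (snd (xy (fst u0)))) (fst (xy (fst u0))))"
      using ob set_obsdist by blast
    hence "m \<in> Mn n S" using set_Tpow IH by blast
    thus ?thesis using Some xyu by (simp add: fhat_def)
  qed
  thus ?case using IH unfolding u Gstep_def by simp
qed

lemma QD:
  "u \<in> set_pmf (Qp g k) \<Longrightarrow> u' \<in> set_pmf (Qp g k) \<Longrightarrow> fst u = fst u' \<Longrightarrow> u = u'"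
proof (induction k arbitrary: u u')
  case 0
  thus ?case by auto
next
  case (Suc k)
  from Suc.prems(1) obtain u0 ob where u0: "u0 \<in> set_pmf (Qp g k)" and u: "u = Gstep g u0 ob" by auto
  from Suc.prems(2) obtain u0' ob' where u0': "u0' \<in> set_pmf (Qp g k)" and u': "u' = Gstep g u0' ob'" by auto
  from Suc.prems(3) have "fst u0 = fst u0'" "ob = ob'" unfolding u u' Gstep_def by simp_all
  moreover have "u0 = u0'" using Suc.IH[OF u0 u0'] calculation(1) .
  ultimately show ?case unfolding u u' by simp
qed

lemma Qfin: "finite (set_pmf (Qp g k))"
proof (induction k)
  case 0
  have "set_pmf (Qp g 0) \<subseteq> (\<lambda>e. ([Some e], [g 1 [Some e] []])) ` Mn n S"
    using init_emp by auto
  thus ?case using finite_Mn[OF S_fin] finite_subset by blast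
next
  case (Suc k)
  have "set_pmf (Qp g (Suc k)) = (\<Union>u\<in>set_pmf (Qp g k). Gstep g u ` set_pmf
      (obsdist (TT (Suc (snd (xy (fst u)))) (fst (xy (fst u)))) (last (snd u))))" by simp
  moreover have "finite (set_pmf (obsdist (TT (Suc (snd (xy (fst u)))) (fst (xy (fst u)))) (last (snd u))))"
    if "u \<in> set_pmf (Qp g k)" for u
    using set_obsdist finite_Tpow QI[OF that] finite_subset by blast
  ultimately show ?case using Suc.IH by simp
qed

lemma TI:
  "hs \<in> set_pmf (traj n f init noise q g k) \<Longrightarrow> hs \<noteq> [] \<and> (\<forall>i<n. fst (last hs) i \<in> S)"
proof (induction k arbitrary: hs)
  case 0 thus ?case using init_range by auto
next
  case (Suc k)
  then obtain hs0 w b where hs0: "hs0 \<in> set_pmf (traj n f init noise q g k)"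
    and w: "w \<in> set_pmf noise" and hs: "hs = ext_hist n f g hs0 w b" by auto
  note IH = Suc.IH[OF hs0]
  have "emp n (fst (last hs0)) \<in> Mn n S" using IH emp_Mn[OF n_pos S_fin] by blast
  hence "\<forall>i<n. f (fst (last hs0) i) (emp n (fst (last hs0))) (w i) \<in> S"
    using IH w noise_range f_range by blast
  thus ?case unfolding hs ext_hist_def by (simp add: Let_def)
qed

end



context setting begin

definition Phi :: "hist \<Rightarrow> (obs list \<times> bool list) \<times> mf" where
  "Phi hs = ((obs_of hs, acts_of hs), emp n (fst (last hs)))"

definition stepPhi :: "strategy \<Rightarrow> obs list \<times> bool list \<Rightarrow> mf \<Rightarrow> ((obs list \<times> bool list) \<times> mf) pmf" where
  "stepPhi g u m = bind_pmf (Tstep n S f noise m) (\<lambda>m'. map_pmf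
      (\<lambda>b. (Gstep g u (if last (snd u) \<and> b then Some m' else None), m')) (bernoulli_pmf q))"

lemma Phi_step:
  assumes hs: "hs \<noteq> []" "\<forall>i<n. fst (last hs) i \<in> S"
  shows "map_pmf Phi (bind_pmf noise (\<lambda>w. map_pmf (ext_hist n f g hs w) (bernoulli_pmf q)))
       = stepPhi g (fst (Phi hs)) (snd (Phi hs))"
proof -
  define s where "s = fst (last hs)"
  define E where "E = (\<lambda>w. emp n (\<lambda>i. f (s i) (emp n s) (w i)))"
  define K where "K = (\<lambda>m'. map_pmf (\<lambda>b. (Gstep g (obs_of hs, acts_of hs)
      (if last (acts_of hs) \<and> b then Some m' else None), m')) (bernoulli_pmf q))"
  have la: "last (acts_of hs) = snd (snd (last hs))" using hs(1) unfolding acts_of_def by (simp add: last_map)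
  have lo: "length (obs_of hs) = length hs" unfolding obs_of_def by simp
  have ph: "Phi (ext_hist n f g hs w b) = (Gstep g (obs_of hs, acts_of hs)
      (if last (acts_of hs) \<and> b then Some (E w) else None), E w)" for w b
    unfolding Phi_def ext_hist_def Gstep_def E_def s_def la lo
    by (simp add: Let_def obs_of_def acts_of_def)
  have "map_pmf Phi (bind_pmf noise (\<lambda>w. map_pmf (ext_hist n f g hs w) (bernoulli_pmf q)))
      = bind_pmf noise (\<lambda>w. K (E w))"
    unfolding map_bind_pmf pmf.map_comp o_def ph K_def ..
  also have "\<dots> = bind_pmf (map_pmf E noise) K" by (simp add: bind_map_pmf)
  also have "map_pmf E noise = Tstep n S f noise (emp n s)"
    unfolding E_def by (rule Tstep_emp) (use hs s_def in simp)
  finally show ?thesis unfolding stepPhi_def K_def Phi_def s_def by simp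
qed

lemma Q_step:
  assumes u: "u \<in> set_pmf (Qp g k)"
  defines "x \<equiv> fst (xy (fst u))" and "y \<equiv> snd (xy (fst u))"
  shows "bind_pmf (TT y x) (stepPhi g u)
       = bind_pmf (obsdist (TT (Suc y) x) (last (snd u)))
           (\<lambda>ob. map_pmf (Pair (Gstep g u ob)) (TT (snd (xy (fst (Gstep g u ob)))) (fst (xy (fst (Gstep g u ob))))))"
proof -
  have ne: "fst u \<noteq> []" using QI[OF u] by blast
  have xyG: "xy (fst (Gstep g u ob)) = fhat x y ob" for ob
    unfolding Gstep_def x_def y_def using ne by (simp add: xy_snoc)
  define G where "G = Gstep g u"
  define T' where "T' = TT (Suc y) x"
  have lhs: "bind_pmf (TT y x) (stepPhi g u)
      = bind_pmf T' (\<lambda>m'. map_pmf (\<lambda>b. (G (if last (snd u) \<and> b then Some m' else None), m')) (bernoulli_pmf q))"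
    unfolding stepPhi_def T'_def G_def by (simp add: bind_assoc_pmf)
  have rhs: "bind_pmf (obsdist (TT (Suc y) x) (last (snd u)))
           (\<lambda>ob. map_pmf (Pair (Gstep g u ob)) (TT (snd (xy (fst (Gstep g u ob)))) (fst (xy (fst (Gstep g u ob))))))
      = bind_pmf (obsdist T' (last (snd u))) (\<lambda>ob. map_pmf (Pair (G ob)) (TT (snd (fhat x y ob)) (fst (fhat x y ob))))"
    unfolding xyG G_def T'_def ..
  show ?thesis
  proof (cases "last (snd u)")
    case False
    thus ?thesis unfolding lhs rhs
      by (simp add: obsdist_def bind_return_pmf fhat_def T'_def map_pmf_def)
  next
    case True
    have "bind_pmf T' (\<lambda>m'. map_pmf (\<lambda>b. (G (if b then Some m' else None), m')) (bernoulli_pmf q))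
        = bind_pmf (bernoulli_pmf q) (\<lambda>b. bind_pmf T' (\<lambda>m'. return_pmf (G (if b then Some m' else None), m')))"
      unfolding map_pmf_def by (rule bind_commute_pmf)
    also have "\<dots> = bind_pmf (bernoulli_pmf q) (\<lambda>b. bind_pmf (if b then map_pmf Some T' else return_pmf None)
        (\<lambda>ob. map_pmf (Pair (G ob)) (TT (snd (fhat x y ob)) (fst (fhat x y ob)))))"
    proof (rule bind_pmf_cong[OF refl])
      fix b :: bool
      show "bind_pmf T' (\<lambda>m'. return_pmf (G (if b then Some m' else None), m'))
          = bind_pmf (if b then map_pmf Some T' else return_pmf None)
             (\<lambda>ob. map_pmf (Pair (G ob)) (TT (snd (fhat x y ob)) (fst (fhat x y ob))))"
      proof (cases b)
        case True
        have "bind_pmf (map_pmf Some T') (\<lambda>ob. map_pmf (Pair (G ob)) (TT (snd (fhat x y ob)) (fst (fhat x y ob))))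
            = bind_pmf T' (\<lambda>m'. map_pmf (Pair (G (Some m'))) (TT (snd (fhat x y (Some m'))) (fst (fhat x y (Some m')))))"
          by (rule bind_map_pmf)
        also have "\<dots> = bind_pmf T' (\<lambda>m'. return_pmf (G (Some m'), m'))"
          by (simp add: fhat_def)
        finally show ?thesis using True by simp
      next
        case False
        thus ?thesis by (simp add: bind_return_pmf fhat_def T'_def map_pmf_def)
      qed
    qed
    finally show ?thesis unfolding lhs rhs using True
      by (simp add: obsdist_def bind_assoc_pmf)
  qed
qed

lemma Main:
  "map_pmf Phi (traj n f init noise q g k)
     = bind_pmf (Qp g k) (\<lambda>u. map_pmf (Pair u) (TT (snd (xy (fst u))) (fst (xy (fst u)))))"
proof (induction k)
  case 0
  show ?case
    by (simp add: map_pmf_comp bind_map_pmf Phi_def obs_of_def acts_of_def xy_single map_pmf_def[symmetric])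
next
  case (Suc k)
  have "map_pmf Phi (traj n f init noise q g (Suc k))
      = bind_pmf (traj n f init noise q g k) (\<lambda>hs. map_pmf Phi (bind_pmf noise (\<lambda>w. map_pmf (ext_hist n f g hs w) (bernoulli_pmf q))))"
    unfolding traj.simps by (rule map_bind_pmf)
  also have "\<dots> = bind_pmf (traj n f init noise q g k) (\<lambda>hs. stepPhi g (fst (Phi hs)) (snd (Phi hs)))"
  proof (rule bind_pmf_cong[OF refl])
    fix hs assume "hs \<in> set_pmf (traj n f init noise q g k)"
    note ti = TI[OF this]
    show "map_pmf Phi (bind_pmf noise (\<lambda>w. map_pmf (ext_hist n f g hs w) (bernoulli_pmf q)))
       = stepPhi g (fst (Phi hs)) (snd (Phi hs))"
      by (rule Phi_step) (use ti in auto)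
  qed
  also have "\<dots> = bind_pmf (map_pmf Phi (traj n f init noise q g k)) (\<lambda>z. stepPhi g (fst z) (snd z))"
    by (simp add: bind_map_pmf)
  also have "\<dots> = bind_pmf (Qp g k) (\<lambda>u. bind_pmf (TT (snd (xy (fst u))) (fst (xy (fst u)))) (stepPhi g u))"
    unfolding Suc.IH by (simp add: bind_assoc_pmf bind_map_pmf)
  also have "\<dots> = bind_pmf (Qp g k) (\<lambda>u. bind_pmf (obsdist (TT (Suc (snd (xy (fst u)))) (fst (xy (fst u)))) (last (snd u)))
           (\<lambda>ob. map_pmf (Pair (Gstep g u ob)) (TT (snd (xy (fst (Gstep g u ob)))) (fst (xy (fst (Gstep g u ob)))))))"
    by (rule bind_pmf_cong[OF refl]) (erule Q_step)
  also have "\<dots> = bind_pmf (Qp g (Suc k)) (\<lambda>u. map_pmf (Pair u) (TT (snd (xy (fst u))) (fst (xy (fst u)))))"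
    by (simp add: bind_assoc_pmf bind_map_pmf)
  finally show ?case .
qed

end



lemma exp_sum:
  fixes f :: "'a \<Rightarrow> real"
  assumes "finite (set_pmf p)"
  shows "measure_pmf.expectation p f = (\<Sum>x\<in>set_pmf p. f x * pmf p x)"
  by (rule integral_measure_pmf_real) (use assms in auto)

lemma integral_pmf_cong:
  fixes f g :: "'a \<Rightarrow> real"
  assumes "\<And>x. x \<in> set_pmf p \<Longrightarrow> f x = g x"
  shows "measure_pmf.expectation p f = measure_pmf.expectation p g"
  by (rule integral_cong_AE) (use assms in \<open>auto intro!: AE_pmfI\<close>)

context setting begin

lemma belief_eq:
  assumes hs: "hs \<in> set_pmf (traj n f init noise q g k)"
  shows "belief n (traj n f init noise q g k) hs = TT (snd (xy (obs_of hs))) (fst (xy (obs_of hs)))"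
proof -
  let ?P = "traj n f init noise q g k"
  let ?R = "bind_pmf (Qp g k) (\<lambda>u. map_pmf (Pair u) (TT (snd (xy (fst u))) (fst (xy (fst u)))))"
  define C' where "C' = {z :: (obs list \<times> bool list) \<times> mf. fst (fst z) = obs_of hs \<and> butlast (snd (fst z)) = butlast (acts_of hs)}"
  define u0 where "u0 = (obs_of hs, acts_of hs)"
  have C: "{hs'. obs_of hs' = obs_of hs \<and> butlast (acts_of hs') = butlast (acts_of hs)} = Phi -` C'"
    unfolding C'_def Phi_def by auto
  have ne: "set_pmf ?P \<inter> Phi -` C' \<noteq> {}" using hs unfolding C'_def Phi_def by auto
  have "belief n ?P hs = map_pmf snd (map_pmf Phi (cond_pmf ?P (Phi -` C')))"
    unfolding belief_def C by (simp add: map_pmf_comp Phi_def)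
  also have "map_pmf Phi (cond_pmf ?P (Phi -` C')) = cond_pmf ?R C'"
    unfolding cond_map_pmf[OF ne, symmetric] Main ..
  finally have b1: "belief n ?P hs = map_pmf snd (cond_pmf ?R C')" .
  have PhiR: "Phi hs \<in> set_pmf ?R" using hs unfolding Main[symmetric] by auto
  hence u0Q: "u0 \<in> set_pmf (Qp g k)" unfolding u0_def Phi_def by auto
  have "Phi hs \<in> C'" unfolding C'_def Phi_def by simp
  hence neR: "set_pmf ?R \<inter> C' \<noteq> {}" using PhiR by blast
  have eqset: "C' \<inter> set_pmf ?R = ({u0} \<times> UNIV) \<inter> set_pmf ?R"
  proof (intro equalityI subsetI)
    fix z assume z: "z \<in> C' \<inter> set_pmf ?R"
    hence "fst z \<in> set_pmf (Qp g k)" by auto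
    moreover have "fst (fst z) = fst u0" using z unfolding C'_def u0_def by auto
    ultimately have "fst z = u0" using QD u0Q by blast
    thus "z \<in> ({u0} \<times> UNIV) \<inter> set_pmf ?R" using z by (cases z) auto
  next
    fix z assume "z \<in> ({u0} \<times> UNIV) \<inter> set_pmf ?R"
    thus "z \<in> C' \<inter> set_pmf ?R" unfolding C'_def u0_def by auto
  qed
  have "cond_pmf ?R C' = cond_pmf ?R ({u0} \<times> UNIV)"
    by (rule cond_pmf_cong_set[OF neR eqset])
  also have "\<dots> = map_pmf (Pair u0) (TT (snd (xy (fst u0))) (fst (xy (fst u0))))"
    by (rule cond_pmf_pair[OF u0Q])
  finally show ?thesis unfolding b1 by (simp add: map_pmf_comp u0_def)
qed

lemma pmf_obsdist_gen:
  "pmf (obsdist P a) ob = (1 - of_bool a * q) * of_bool (ob = None)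
     + of_bool a * q * (case ob of None \<Rightarrow> 0 | Some m \<Rightarrow> pmf P m)"
proof (cases a)
  case False
  thus ?thesis unfolding obsdist_def by (cases ob) auto
next
  case True
  have "pmf (obsdist P a) ob = pmf (map_pmf Some P) ob * q + pmf (return_pmf None) ob * (1 - q)"
    using True q_range by (simp add: obsdist_def pmf_bind)
  also have "\<dots> = (1 - of_bool a * q) * of_bool (ob = None)
     + of_bool a * q * (case ob of None \<Rightarrow> 0 | Some m \<Rightarrow> pmf P m)"
  proof (cases ob)
    case None
    have "pmf (map_pmf Some P) None = 0" by (simp add: pmf_eq_0_set_pmf)
    thus ?thesis using None True by simp
  next
    case (Some m)
    have "pmf (map_pmf Some P) (Some m) = pmf P m"
      by (rule pmf_map_inj') simp
    thus ?thesis using Some True by simp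
  qed
  finally show ?thesis .
qed

lemma pmf_obsdist:
  "pmf (obsdist (TT (Suc y) x) a) ob = obsprob n S f noise q x y a ob"
  unfolding pmf_obsdist_gen obsprob_def ..

lemma cost_eq:
  "measure_pmf.expectation (traj n f init noise q g k)
     (\<lambda>hs. c (emp n (fst (last hs))) (h (belief n (traj n f init noise q g k) hs)) (snd (snd (last hs))))
   = measure_pmf.expectation (Qp g k)
     (\<lambda>u. chat n S f noise h c (fst (xy (fst u))) (snd (xy (fst u))) (last (snd u)))"
proof -
  define F where "F = (\<lambda>z :: (obs list \<times> bool list) \<times> mf.
     c (snd z) (h (TT (snd (xy (fst (fst z)))) (fst (xy (fst (fst z)))))) (last (snd (fst z))))"
  have "measure_pmf.expectation (traj n f init noise q g k)
     (\<lambda>hs. c (emp n (fst (last hs))) (h (belief n (traj n f init noise q g k) hs)) (snd (snd (last hs))))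
     = measure_pmf.expectation (traj n f init noise q g k) (\<lambda>hs. F (Phi hs))"
  proof (rule integral_pmf_cong)
    fix hs assume hs: "hs \<in> set_pmf (traj n f init noise q g k)"
    have "hs \<noteq> []" using TI[OF hs] by blast
    hence "last (acts_of hs) = snd (snd (last hs))" unfolding acts_of_def by (simp add: last_map)
    thus "c (emp n (fst (last hs))) (h (belief n (traj n f init noise q g k) hs)) (snd (snd (last hs))) = F (Phi hs)"
      unfolding F_def Phi_def belief_eq[OF hs] by simp
  qed
  also have "\<dots> = measure_pmf.expectation (map_pmf Phi (traj n f init noise q g k)) F" by simp
  also have "\<dots> = measure_pmf.expectation (Qp g k)
      (\<lambda>u. measure_pmf.expectation (map_pmf (Pair u) (TT (snd (xy (fst u))) (fst (xy (fst u))))) F)"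
    unfolding Main
    by (rule expectation_bind_finite[OF Qfin]) (use QI finite_Tpow in auto)
  also have "\<dots> = measure_pmf.expectation (Qp g k)
     (\<lambda>u. chat n S f noise h c (fst (xy (fst u))) (snd (xy (fst u))) (last (snd u)))"
  proof (rule integral_pmf_cong)
    fix u assume u: "u \<in> set_pmf (Qp g k)"
    have x: "fst (xy (fst u)) \<in> Mn n S" using QI[OF u] by blast
    show "measure_pmf.expectation (map_pmf (Pair u) (TT (snd (xy (fst u))) (fst (xy (fst u))))) F
       = chat n S f noise h c (fst (xy (fst u))) (snd (xy (fst u))) (last (snd u))"
      unfolding chat_def F_def integral_map_pmf fst_conv snd_conv
      by (rule integral_measure_pmf_real) (use finite_Mn[OF S_fin] set_Tpow[OF x] in auto)
  qed
  finally show ?thesis .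
qed

lemma value_eq:
  fixes U :: "mf \<Rightarrow> nat \<Rightarrow> real"
  shows "measure_pmf.expectation (Qp g (Suc k)) (\<lambda>u. U (fst (xy (fst u))) (snd (xy (fst u))))
   = measure_pmf.expectation (Qp g k) (\<lambda>u. \<Sum>ob\<in>Ob.
        obsprob n S f noise q (fst (xy (fst u))) (snd (xy (fst u))) (last (snd u)) ob
        * case_prod U (fhat (fst (xy (fst u))) (snd (xy (fst u))) ob))"
proof -
  have "measure_pmf.expectation (Qp g (Suc k)) (\<lambda>u. U (fst (xy (fst u))) (snd (xy (fst u))))
      = measure_pmf.expectation (Qp g k) (\<lambda>u. measure_pmf.expectation
          (map_pmf (Gstep g u) (obsdist (TT (Suc (snd (xy (fst u)))) (fst (xy (fst u)))) (last (snd u))))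
          (\<lambda>u. U (fst (xy (fst u))) (snd (xy (fst u)))))"
    unfolding Qp.simps
  proof (rule expectation_bind_finite[OF Qfin])
    fix u assume u: "u \<in> set_pmf (Qp g k)"
    have "finite (set_pmf (obsdist (TT (Suc (snd (xy (fst u)))) (fst (xy (fst u)))) (last (snd u))))"
      using set_obsdist finite_Tpow QI[OF u] finite_subset by blast
    thus "finite (set_pmf (map_pmf (Gstep g u) (obsdist (TT (Suc (snd (xy (fst u)))) (fst (xy (fst u)))) (last (snd u)))))"
      by simp
  qed
  also have "\<dots> = measure_pmf.expectation (Qp g k) (\<lambda>u. \<Sum>ob\<in>Ob.
        obsprob n S f noise q (fst (xy (fst u))) (snd (xy (fst u))) (last (snd u)) ob
        * case_prod U (fhat (fst (xy (fst u))) (snd (xy (fst u))) ob))"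
  proof (rule integral_pmf_cong)
    fix u assume u: "u \<in> set_pmf (Qp g k)"
    have ne: "fst u \<noteq> []" and x: "fst (xy (fst u)) \<in> Mn n S" using QI[OF u] by blast+
    have "measure_pmf.expectation
          (map_pmf (Gstep g u) (obsdist (TT (Suc (snd (xy (fst u)))) (fst (xy (fst u)))) (last (snd u))))
          (\<lambda>u. U (fst (xy (fst u))) (snd (xy (fst u))))
        = measure_pmf.expectation (obsdist (TT (Suc (snd (xy (fst u)))) (fst (xy (fst u)))) (last (snd u)))
          (\<lambda>ob. case_prod U (fhat (fst (xy (fst u))) (snd (xy (fst u))) ob))"
      unfolding integral_map_pmf Gstep_def using ne by (simp add: xy_snoc case_prod_beta)
    also have "\<dots> = (\<Sum>ob\<in>Ob. case_prod U (fhat (fst (xy (fst u))) (snd (xy (fst u))) ob)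
         * pmf (obsdist (TT (Suc (snd (xy (fst u)))) (fst (xy (fst u)))) (last (snd u))) ob)"
      by (rule integral_measure_pmf_real) (use finite_Ob set_obsdist set_Tpow[OF x] in blast)+
    also have "\<dots> = (\<Sum>ob\<in>Ob.
        obsprob n S f noise q (fst (xy (fst u))) (snd (xy (fst u))) (last (snd u)) ob
        * case_prod U (fhat (fst (xy (fst u))) (snd (xy (fst u))) ob))"
      unfolding pmf_obsdist by (simp add: mult.commute)
    finally show "measure_pmf.expectation
          (map_pmf (Gstep g u) (obsdist (TT (Suc (snd (xy (fst u)))) (fst (xy (fst u)))) (last (snd u))))
          (\<lambda>u. U (fst (xy (fst u))) (snd (xy (fst u))))
        = (\<Sum>ob\<in>Ob.
        obsprob n S f noise q (fst (xy (fst u))) (snd (xy (fst u))) (last (snd u)) ob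
        * case_prod U (fhat (fst (xy (fst u))) (snd (xy (fst u))) ob))" .
  qed
  finally show ?thesis .
qed

end



lemma tele_le:
  fixes D C :: "nat \<Rightarrow> real"
  assumes g: "0 \<le> \<gamma>" and st: "\<And>k. D k \<le> C k + \<gamma> * D (Suc k)"
  shows "D 0 \<le> (\<Sum>k<N. \<gamma> ^ k * C k) + \<gamma> ^ N * D N"
proof (induction N)
  case 0 thus ?case by simp
next
  case (Suc N)
  have "\<gamma> ^ N * D N \<le> \<gamma> ^ N * (C N + \<gamma> * D (Suc N))"
    by (rule mult_left_mono[OF st]) (simp add: g)
  moreover have "(\<Sum>k<Suc N. \<gamma> ^ k * C k) + \<gamma> ^ Suc N * D (Suc N)
     = (\<Sum>k<N. \<gamma> ^ k * C k) + \<gamma> ^ N * (C N + \<gamma> * D (Suc N))"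
    by (simp add: ring_distribs mult_ac)
  ultimately show ?case using Suc.IH by linarith
qed

lemma tele_eq:
  fixes D C :: "nat \<Rightarrow> real"
  assumes st: "\<And>k. D k = C k + \<gamma> * D (Suc k)"
  shows "D 0 = (\<Sum>k<N. \<gamma> ^ k * C k) + \<gamma> ^ N * D N"
proof (induction N)
  case 0 thus ?case by simp
next
  case (Suc N)
  have "\<gamma> ^ N * D N = \<gamma> ^ N * (C N + \<gamma> * D (Suc N))" by (subst st[of N]) (rule refl)
  moreover have "(\<Sum>k<Suc N. \<gamma> ^ k * C k) + \<gamma> ^ Suc N * D (Suc N)
     = (\<Sum>k<N. \<gamma> ^ k * C k) + \<gamma> ^ N * (C N + \<gamma> * D (Suc N))"
    by (simp add: ring_distribs mult_ac)
  ultimately show ?case using Suc.IH by linarith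
qed

lemma tele_lim:
  fixes D C :: "nat \<Rightarrow> real"
  assumes g: "0 \<le> \<gamma>" "\<gamma> < 1" and DB: "\<And>N. \<bar>D N\<bar> \<le> B" and CB: "\<And>k. 0 \<le> C k \<and> C k \<le> Cb"
  shows "(\<lambda>N. (\<Sum>k<N. \<gamma> ^ k * C k) + \<gamma> ^ N * D N) \<longlonglongrightarrow> (\<Sum>k. \<gamma> ^ k * C k)"
proof -
  have sm: "summable (\<lambda>k. \<gamma> ^ k * C k)"
    by (rule summable_comparison_test[where g="\<lambda>k. \<gamma> ^ k * Cb"])
       (use g CB in \<open>auto intro!: summable_mult2 summable_geometric mult_left_mono\<close>)
  have "(\<lambda>N. \<gamma> ^ N * D N) \<longlonglongrightarrow> 0"
  proof (rule Lim_null_comparison)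
    show "\<forall>\<^sub>F N in sequentially. norm (\<gamma> ^ N * D N) \<le> \<gamma> ^ N * B"
    proof (rule always_eventually, rule allI)
      fix N
      have "\<gamma> ^ N * \<bar>D N\<bar> \<le> \<gamma> ^ N * B" by (rule mult_left_mono[OF DB]) (simp add: g)
      thus "norm (\<gamma> ^ N * D N) \<le> \<gamma> ^ N * B" using g(1) by (simp add: abs_mult)
    qed
    show "(\<lambda>N. \<gamma> ^ N * B) \<longlonglongrightarrow> 0"
      using g by (intro tendsto_mult_left_zero LIMSEQ_power_zero) simp
  qed
  hence "(\<lambda>N. (\<Sum>k<N. \<gamma> ^ k * C k) + \<gamma> ^ N * D N) \<longlonglongrightarrow> (\<Sum>k. \<gamma> ^ k * C k) + 0"
    by (intro tendsto_add summable_LIMSEQ sm)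
  thus ?thesis by simp
qed

context setting begin

definition Cst :: "strategy \<Rightarrow> nat \<Rightarrow> real" where "Cst g k = measure_pmf.expectation (Qp g k)
     (\<lambda>u. chat n S f noise h c (fst (xy (fst u))) (snd (xy (fst u))) (last (snd u)))"

definition Dv :: "(mf \<Rightarrow> nat \<Rightarrow> real) \<Rightarrow> strategy \<Rightarrow> nat \<Rightarrow> real" where "Dv V g k = measure_pmf.expectation (Qp g k) (\<lambda>u. V (fst (xy (fst u))) (snd (xy (fst u))))"

lemma J_eq: "J n f init noise q h c \<gamma> g = (\<Sum>k. \<gamma> ^ k * Cst g k)"
  unfolding J_def cost_eq Cst_def ..

lemma Cst_bounds: "0 \<le> Cst g k \<and> Cst g k \<le> Cb"
proof -
  let ?ch = "\<lambda>u. chat n S f noise h c (fst (xy (fst u))) (snd (xy (fst u))) (last (snd u))"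
  have e: "Cst g k = (\<Sum>u\<in>set_pmf (Qp g k). ?ch u * pmf (Qp g k) u)"
    unfolding Cst_def by (rule exp_sum[OF Qfin])
  have b: "0 \<le> ?ch u \<and> ?ch u \<le> Cb" if "u \<in> set_pmf (Qp g k)" for u
    using chat_bounds QI[OF that] by blast
  have "0 \<le> (\<Sum>u\<in>set_pmf (Qp g k). ?ch u * pmf (Qp g k) u)"
    using b by (intro sum_nonneg) simp
  moreover have "(\<Sum>u\<in>set_pmf (Qp g k). ?ch u * pmf (Qp g k) u) \<le> (\<Sum>u\<in>set_pmf (Qp g k). Cb * pmf (Qp g k) u)"
    using b by (intro sum_mono mult_right_mono) simp_all
  moreover have "(\<Sum>u\<in>set_pmf (Qp g k). Cb * pmf (Qp g k) u) = Cb"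
    using sum_pmf_eq_1[OF Qfin subset_refl] by (simp add: sum_distrib_left[symmetric])
  ultimately show ?thesis unfolding e by simp
qed

lemma Dv_bound:
  fixes V :: "mf \<Rightarrow> nat \<Rightarrow> real"
  assumes B: "\<forall>x\<in>Mn n S. \<forall>y. \<bar>V x y\<bar> \<le> B"
  shows "\<bar>Dv V g k\<bar> \<le> B"
proof -
  let ?v = "\<lambda>u. V (fst (xy (fst u))) (snd (xy (fst u)))"
  have e: "Dv V g k = (\<Sum>u\<in>set_pmf (Qp g k). ?v u * pmf (Qp g k) u)"
    unfolding Dv_def by (rule exp_sum[OF Qfin])
  have "\<bar>\<Sum>u\<in>set_pmf (Qp g k). ?v u * pmf (Qp g k) u\<bar> \<le> (\<Sum>u\<in>set_pmf (Qp g k). \<bar>?v u * pmf (Qp g k) u\<bar>)"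
    by (rule sum_abs)
  also have "\<dots> \<le> (\<Sum>u\<in>set_pmf (Qp g k). B * pmf (Qp g k) u)"
  proof (rule sum_mono)
    fix u assume "u \<in> set_pmf (Qp g k)"
    hence "\<bar>?v u\<bar> \<le> B" using B QI by blast
    thus "\<bar>?v u * pmf (Qp g k) u\<bar> \<le> B * pmf (Qp g k) u"
      by (simp add: abs_mult mult_right_mono)
  qed
  also have "\<dots> = B"
    using sum_pmf_eq_1[OF Qfin subset_refl] by (simp add: sum_distrib_left[symmetric])
  finally show ?thesis unfolding e .
qed

lemma Qval_split:
  "Qval n S f noise q h c \<gamma> V (fst (xy (fst u))) (snd (xy (fst u))) (last (snd u))
   = chat n S f noise h c (fst (xy (fst u))) (snd (xy (fst u))) (last (snd u))
     + \<gamma> * (\<Sum>ob\<in>Ob.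
        obsprob n S f noise q (fst (xy (fst u))) (snd (xy (fst u))) (last (snd u)) ob
        * case_prod V (fhat (fst (xy (fst u))) (snd (xy (fst u))) ob))"
  unfolding Qval_def ..

lemma Dv_step_gen:
  assumes rel: "\<And>u. u \<in> set_pmf (Qp g k) \<Longrightarrow>
     R (V (fst (xy (fst u))) (snd (xy (fst u))))
       (Qval n S f noise q h c \<gamma> V (fst (xy (fst u))) (snd (xy (fst u))) (last (snd u)))"
    and mono: "\<And>F G. (\<And>u. u \<in> set_pmf (Qp g k) \<Longrightarrow> R (F u) (G u)) \<Longrightarrow>
       R (\<Sum>u\<in>set_pmf (Qp g k). F u * pmf (Qp g k) u) (\<Sum>u\<in>set_pmf (Qp g k). G u * pmf (Qp g k) u)"
  shows "R (Dv V g k) (Cst g k + \<gamma> * Dv V g (Suc k))"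
proof -
  let ?Q = "Qp g k"
  let ?ch = "\<lambda>u. chat n S f noise h c (fst (xy (fst u))) (snd (xy (fst u))) (last (snd u))"
  let ?sg = "\<lambda>u. \<Sum>ob\<in>Ob.
        obsprob n S f noise q (fst (xy (fst u))) (snd (xy (fst u))) (last (snd u)) ob
        * case_prod V (fhat (fst (xy (fst u))) (snd (xy (fst u))) ob)"
  have e1: "Dv V g k = (\<Sum>u\<in>set_pmf ?Q. V (fst (xy (fst u))) (snd (xy (fst u))) * pmf ?Q u)"
    unfolding Dv_def by (rule exp_sum[OF Qfin])
  have e2: "Cst g k = (\<Sum>u\<in>set_pmf ?Q. ?ch u * pmf ?Q u)"
    unfolding Cst_def by (rule exp_sum[OF Qfin])
  have e3: "Dv V g (Suc k) = (\<Sum>u\<in>set_pmf ?Q. ?sg u * pmf ?Q u)"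
    unfolding Dv_def value_eq by (rule exp_sum[OF Qfin])
  have e4: "Cst g k + \<gamma> * Dv V g (Suc k) = (\<Sum>u\<in>set_pmf ?Q.
       Qval n S f noise q h c \<gamma> V (fst (xy (fst u))) (snd (xy (fst u))) (last (snd u)) * pmf ?Q u)"
    unfolding e2 e3 Qval_split by (simp add: sum.distrib sum_distrib_left algebra_simps)
  show ?thesis unfolding e1 e4 by (rule mono) (rule rel)
qed

lemma Dv_le:
  assumes bell: "bellman n S f noise q h c \<gamma> V"
  shows "Dv V g k \<le> Cst g k + \<gamma> * Dv V g (Suc k)"
proof (rule Dv_step_gen[where R="(\<le>)"])
  fix u assume u: "u \<in> set_pmf (Qp g k)"
  hence x: "fst (xy (fst u)) \<in> Mn n S" using QI by blast
  show "V (fst (xy (fst u))) (snd (xy (fst u)))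
     \<le> Qval n S f noise q h c \<gamma> V (fst (xy (fst u))) (snd (xy (fst u))) (last (snd u))"
  proof -
    have "V (fst (xy (fst u))) (snd (xy (fst u))) = min
       (Qval n S f noise q h c \<gamma> V (fst (xy (fst u))) (snd (xy (fst u))) False)
       (Qval n S f noise q h c \<gamma> V (fst (xy (fst u))) (snd (xy (fst u))) True)"
      using bell x unfolding bellman_def by blast
    thus ?thesis by (cases "last (snd u)") simp_all
  qed
next
  fix F G :: "obs list \<times> bool list \<Rightarrow> real"
  assume "\<And>u. u \<in> set_pmf (Qp g k) \<Longrightarrow> F u \<le> G u"
  thus "(\<Sum>u\<in>set_pmf (Qp g k). F u * pmf (Qp g k) u) \<le> (\<Sum>u\<in>set_pmf (Qp g k). G u * pmf (Qp g k) u)"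
    by (intro sum_mono mult_right_mono) simp_all
qed

lemma Dv_eq:
  assumes hs: "\<forall>os as. os \<noteq> [] \<and> fst (xy os) \<in> Mn n S \<longrightarrow>
                  V (fst (xy os)) (snd (xy os))
                  = Qval n S f noise q h c \<gamma> V (fst (xy os)) (snd (xy os)) (gstar (length os) os as)"
  shows "Dv V gstar k = Cst gstar k + \<gamma> * Dv V gstar (Suc k)"
proof (rule Dv_step_gen[where R="(=)"])
  fix u assume u: "u \<in> set_pmf (Qp gstar k)"
  note qi = QI[OF u]
  show "V (fst (xy (fst u))) (snd (xy (fst u)))
     = Qval n S f noise q h c \<gamma> V (fst (xy (fst u))) (snd (xy (fst u))) (last (snd u))"
  proof -
    have l: "last (snd u) = gstar (length (fst u)) (fst u) (butlast (snd u))" using qi by blast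
    have pre: "fst u \<noteq> [] \<and> fst (xy (fst u)) \<in> Mn n S" using qi by blast
    show ?thesis unfolding l by (rule hs[rule_format, OF pre])
  qed
next
  fix F G :: "obs list \<times> bool list \<Rightarrow> real"
  assume "\<And>u. u \<in> set_pmf (Qp gstar k) \<Longrightarrow> F u = G u"
  thus "(\<Sum>u\<in>set_pmf (Qp gstar k). F u * pmf (Qp gstar k) u) = (\<Sum>u\<in>set_pmf (Qp gstar k). G u * pmf (Qp gstar k) u)"
    by (intro sum.cong) simp_all
qed

lemma Dv0: "Dv V g 0 = measure_pmf.expectation init (\<lambda>s. V (emp n s) 0)"
  unfolding Dv_def by (simp add: xy_single)

lemma optimal:
  assumes bnd: "bounded_V n S V" and bell: "bellman n S f noise q h c \<gamma> V"
    and hs: "\<forall>os as. os \<noteq> [] \<and> fst (xy os) \<in> Mn n S \<longrightarrow>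
                  V (fst (xy os)) (snd (xy os))
                  = Qval n S f noise q h c \<gamma> V (fst (xy os)) (snd (xy os)) (gstar (length os) os as)"
  shows "J n f init noise q h c \<gamma> gstar \<le> J n f init noise q h c \<gamma> g"
proof -
  obtain B where B: "\<forall>x\<in>Mn n S. \<forall>y. \<bar>V x y\<bar> \<le> B" using bnd unfolding bounded_V_def by blast
  have g0: "0 \<le> \<gamma>" using \<gamma>_range by simp
  have limg: "(\<lambda>N. (\<Sum>k<N. \<gamma> ^ k * Cst g k) + \<gamma> ^ N * Dv V g N) \<longlonglongrightarrow> J n f init noise q h c \<gamma> g"
    unfolding J_eq by (rule tele_lim[OF g0 \<gamma>_range(2) Dv_bound[OF B] Cst_bounds])
  have limgs: "(\<lambda>N. (\<Sum>k<N. \<gamma> ^ k * Cst gstar k) + \<gamma> ^ N * Dv V gstar N) \<longlonglongrightarrow> J n f init noise q h c \<gamma> gstar"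
    unfolding J_eq by (rule tele_lim[OF g0 \<gamma>_range(2) Dv_bound[OF B] Cst_bounds])
  have "Dv V g 0 \<le> J n f init noise q h c \<gamma> g"
  proof (rule LIMSEQ_le_const[OF limg])
    have st: "\<And>k. Dv V g k \<le> Cst g k + \<gamma> * Dv V g (Suc k)" by (rule Dv_le[OF bell])
    show "\<exists>N0. \<forall>N\<ge>N0. Dv V g 0 \<le> (\<Sum>k<N. \<gamma> ^ k * Cst g k) + \<gamma> ^ N * Dv V g N"
      using tele_le[where D="Dv V g" and C="Cst g", OF g0 st] by blast
  qed
  moreover have "Dv V gstar 0 = J n f init noise q h c \<gamma> gstar"
  proof -
    have "(\<lambda>N. (\<Sum>k<N. \<gamma> ^ k * Cst gstar k) + \<gamma> ^ N * Dv V gstar N) = (\<lambda>N. Dv V gstar 0)"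
      by (rule ext) (rule tele_eq[where D="Dv V gstar" and C="Cst gstar", OF Dv_eq[where V=V and gstar=gstar, OF hs], symmetric])
    hence "(\<lambda>N. Dv V gstar 0) \<longlonglongrightarrow> J n f init noise q h c \<gamma> gstar" using limgs by simp
    thus ?thesis by (rule LIMSEQ_unique[OF tendsto_const])
  qed
  moreover have "Dv V g 0 = Dv V gstar 0" unfolding Dv0 ..
  ultimately show ?thesis by simp
qed

end


theorem theorem3:
  fixes n :: nat and S W :: "real set"
    and f :: "real \<Rightarrow> mf \<Rightarrow> real \<Rightarrow> real"
    and init noise :: "(nat \<Rightarrow> real) pmf"
    and q \<gamma> :: real
    and h :: "mf pmf \<Rightarrow> mf"
    and c :: "mf \<Rightarrow> mf \<Rightarrow> bool \<Rightarrow> real"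
  assumes n_pos: "n \<ge> 1"
    and S_fin: "finite S" and S_ne: "S \<noteq> {}"
    and W_fin: "finite W"
    and f_range: "\<forall>s\<in>S. \<forall>m\<in>Mn n S. \<forall>w\<in>W. f s m w \<in> S"
    and init_range: "set_pmf init \<subseteq> {s. \<forall>i<n. s i \<in> S}"
    and noise_range: "set_pmf noise \<subseteq> {w. \<forall>i<n. w i \<in> W}"
    and exch: "exchangeable n noise"
    and q_range: "0 \<le> q" "q \<le> 1"
    and \<gamma>_range: "0 < \<gamma>" "\<gamma> < 1"
    and h_range: "\<forall>p. set_pmf p \<subseteq> Mn n S \<longrightarrow> h p \<in> Mn n S"
    and c_nonneg: "\<forall>m\<in>Mn n S. \<forall>m'\<in>Mn n S. \<forall>a. 0 \<le> c m m' a"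
  shows "(\<exists>V. bounded_V n S V \<and> bellman n S f noise q h c \<gamma> V)
       \<and> (\<forall>V gstar. bounded_V n S V \<and> bellman n S f noise q h c \<gamma> V
            \<and> (\<forall>os as. os \<noteq> [] \<and> fst (xy os) \<in> Mn n S \<longrightarrow>
                  V (fst (xy os)) (snd (xy os))
                  = Qval n S f noise q h c \<gamma> V (fst (xy os)) (snd (xy os)) (gstar (length os) os as))
          \<longrightarrow> (\<forall>g. J n f init noise q h c \<gamma> gstar \<le> J n f init noise q h c \<gamma> g))"
proof -
  interpret setting n S W f init noise q \<gamma> h c
    using assms by (simp add: setting_def)
  show ?thesis
  proof (intro conjI allI impI)
    show "\<exists>V. bounded_V n S V \<and> bellman n S f noise q h c \<gamma> V"
      using Vlim_bounded Vlim_bellman by blast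
  next
    fix V :: "mf \<Rightarrow> nat \<Rightarrow> real" and gstar g :: strategy
    assume a: "bounded_V n S V \<and> bellman n S f noise q h c \<gamma> V
            \<and> (\<forall>os as. os \<noteq> [] \<and> fst (xy os) \<in> Mn n S \<longrightarrow>
                  V (fst (xy os)) (snd (xy os))
                  = Qval n S f noise q h c \<gamma> V (fst (xy os)) (snd (xy os)) (gstar (length os) os as))"
    show "J n f init noise q h c \<gamma> gstar \<le> J n f init noise q h c \<gamma> g"
      using optimal[where V=V and gstar=gstar and g=g] a by blast
  qed
qed

end
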